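(* Suppose units arrive in $K$ sequential groups of sizes $n_1,\dots,n_K$ (each even) with $n_{tk}=n_{ck}=n_k/2$ for $k=1,\dots,K$, and the assignment $W=(W_{[1]},\dots,W_{[K]})$ is generated by sequential pair-switching rerandomization (SeqPSRR), assumed to terminate almost surely in every group. Then the difference-in-means estimator $\widehat\tau=\frac{2}{n}\sum_{i=1}^nW_iY_i(1)-\frac2n\sum_{i=1}^n(1-W_i)Y_i(0)$, $n=\sum_kn_k$, satisfies $E(\widehat\tau)=\tau=n^{-1}\sum_{i=1}^n\{Y_i(1)-Y_i(0)\}$.
   Context: Units are indexed so that group $k$ consists of units $n_{1:(k-1)}+1,\dots,n_{1:k}$, where $n_{1:k}=\sum_{l\le k}n_l$; $W_{[k]}$ is the assignment sub-vector of group $k$, with $n_{tk}$ treated and $n_{ck}$ controls. Covariates $X_i\in\mathbb R^p$ are fixed; $S_{XX[k]}$ is the (assumed invertible) sample covariance of the covariates of the first $k$ groups. With earlier groups' assignments fixed, the cumulative Mahalanobis distance of a group-$k$ assignment is $M_k(W_{[k]})=n_{t,1:k}(1-n_{t,1:k}/n_{1:k})(\overline X_{t[1:k]}-\overline X_{c[1:k]})^{\mathrm T}S_{XX[k]}^{-1}(\overline X_{t[1:k]}-\overline X_{c[1:k]})$, where $n_{t,1:k}=\sum_{l\le k}n_{tl}$ and $\overline X_{t[1:k]}$, $\overline X_{c[1:k]}$ are covariate means of treated/control units among the first $k$ groups. SeqPSRR (inputs: positive numbers $s_1,\dots,s_K$, tuning parameter $\gamma\ge0$): set $M_{[0]}=0$;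 for $k=1,\dots,K$: set $a_k=n_k(n_{1:k})^{-1}q_k$, where $q_k$ is the lower $1/s_k$ quantile of a noncentral chi-square distribution with $p$ degrees of freedom and noncentrality parameter $n_{1:(k-1)}n_k^{-1}M_{[k-1]}$; draw $W^{(0)}_{[k]}$ uniformly among group-$k$ assignments with $n_{tk}$ ones; while $M_k(W^{(t)}_{[k]})>a_k$, swap a uniformly chosen treated and a uniformly chosen control unit of group $k$ to get $W^*_{[k]}$ and move to it with probability $\min\{(M_k(W^{(t)}_{[k]})/M_k(W^*_{[k]}))^\gamma,1\}$ (otherwise retry); output the final $W_{[k]}$ and set $M_{[k]}=M_k(W_{[k]})$. *)

theory Defs
  imports "HOL-Analysis.Analysis" "HOL-Probability.Probability"
begin

text \<open>Units are indexed 0,1,2,...; groups are indexed k = 0,...,K-1 (paper: 1,...,K). An assignment is a function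
  W :: nat => bool (True = treated).\<close>

definition cum :: "(nat \<Rightarrow> nat) \<Rightarrow> nat \<Rightarrow> nat" where
  "cum ns k = (\<Sum>l<k. ns l)"

definition group :: "(nat \<Rightarrow> nat) \<Rightarrow> nat \<Rightarrow> nat set" where
  "group ns k = {cum ns k ..< cum ns (Suc k)}"

definition sample_mean :: "(nat \<Rightarrow> real^'p) \<Rightarrow> nat set \<Rightarrow> real^'p" where
  "sample_mean X A = (1 / real (card A)) *\<^sub>R (\<Sum>i\<in>A. X i)"

definition sample_cov :: "(nat \<Rightarrow> real^'p) \<Rightarrow> nat \<Rightarrow> real^'p^'p" where
  "sample_cov X m = (\<chi> a b. (1 / (real m - 1)) *
      (\<Sum>i<m. (X i $ a - sample_mean X {..<m} $ a) * (X i $ b - sample_mean X {..<m} $ b)))"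

definition mahal :: "(nat \<Rightarrow> real^'p) \<Rightarrow> nat \<Rightarrow> (nat \<Rightarrow> bool) \<Rightarrow> real" where
  "mahal X m W =
    (let nt = card {i. i < m \<and> W i};
         d = sample_mean X {i. i < m \<and> W i} - sample_mean X {i. i < m \<and> \<not> W i}
     in real nt * (1 - real nt / real m) * (d \<bullet> (matrix_inv (sample_cov X m) *v d)))"

text \<open>CDF of the noncentral chi-square distribution with p degrees of freedom and
  noncentrality lam: law of sum_{i<p} (Z_i + mu_i)^2 with Z_i iid standard normal and
  sum mu_i^2 = lam (we take mu = (sqrt lam, 0, ..., 0)).\<close>
definition nc_chisq_cdf :: "nat \<Rightarrow> real \<Rightarrow> real \<Rightarrow> real" where
  "nc_chisq_cdf p lam x =
     measure (PiM {..<p} (\<lambda>_. density lborel std_normal_density))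
       {z \<in> space (PiM {..<p} (\<lambda>_. density lborel std_normal_density)).
          (\<Sum>i<p. (z i + (if i = 0 then sqrt lam else 0))\<^sup>2) \<le> x}"

definition nc_chisq_quantile :: "nat \<Rightarrow> real \<Rightarrow> real \<Rightarrow> real" where
  "nc_chisq_quantile p lam \<alpha> = Inf {x. nc_chisq_cdf p lam x \<ge> \<alpha>}"

text \<open>Metropolis-type acceptance probability min{(M(W)/M(W*))^gamma, 1}, with the
  conventions t^0 = 1 (also for t = infinity) and c/0 = infinity for c > 0.\<close>
definition accept_prob :: "real \<Rightarrow> real \<Rightarrow> real \<Rightarrow> real" where
  "accept_prob \<gamma> m mstar =
     (if \<gamma> = 0 \<or> mstar = 0 then 1 else min ((m / mstar) powr \<gamma>) 1)"

partial_function (spmf) psrr_loop ::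
  "real \<Rightarrow> real \<Rightarrow> ((nat \<Rightarrow> bool) \<Rightarrow> real) \<Rightarrow> nat set \<Rightarrow> (nat \<Rightarrow> bool) \<Rightarrow> (nat \<Rightarrow> bool) spmf"
where
  "psrr_loop a \<gamma> M G W =
     (if M W \<le> a then return_spmf W
      else do {
        i \<leftarrow> spmf_of_set {i \<in> G. W i};
        j \<leftarrow> spmf_of_set {j \<in> G. \<not> W j};
        let W' = W(i := False, j := True);
        b \<leftarrow> spmf_of_pmf (bernoulli_pmf (accept_prob \<gamma> (M W) (M W')));
        psrr_loop a \<gamma> M G (if b then W' else W)
      })"

text \<open>SeqPSRR run on the first k groups; returns (assignment, M_[k]).
  ns = group sizes, nt = numbers of treated per group, s = the inputs s_1..s_K,
  gamma = tuning parameter.\<close>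
fun seq_psrr :: "(nat \<Rightarrow> real^'p) \<Rightarrow> (nat \<Rightarrow> nat) \<Rightarrow> (nat \<Rightarrow> nat) \<Rightarrow> (nat \<Rightarrow> real) \<Rightarrow> real
    \<Rightarrow> nat \<Rightarrow> ((nat \<Rightarrow> bool) \<times> real) spmf" where
  "seq_psrr X ns nt s \<gamma> 0 = return_spmf (\<lambda>_. False, 0)"
| "seq_psrr X ns nt s \<gamma> (Suc k) = do {
      (W, Mprev) \<leftarrow> seq_psrr X ns nt s \<gamma> k;
      let q = nc_chisq_quantile CARD('p) (real (cum ns k) / real (ns k) * Mprev) (1 / s k);
      let a = real (ns k) / real (cum ns (Suc k)) * q;
      let G = group ns k;
      T \<leftarrow> spmf_of_set {T. T \<subseteq> G \<and> card T = nt k};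
      let W0 = (\<lambda>i. if i \<in> G then i \<in> T else W i);
      W' \<leftarrow> psrr_loop a \<gamma> (mahal X (cum ns (Suc k))) G W0;
      return_spmf (W', mahal X (cum ns (Suc k)) W')
    }"

definition seqpsrr :: "(nat \<Rightarrow> real^'p) \<Rightarrow> (nat \<Rightarrow> nat) \<Rightarrow> (nat \<Rightarrow> nat) \<Rightarrow> (nat \<Rightarrow> real) \<Rightarrow> real
    \<Rightarrow> nat \<Rightarrow> (nat \<Rightarrow> bool) spmf" where
  "seqpsrr X ns nt s \<gamma> K = map_spmf fst (seq_psrr X ns nt s \<gamma> K)"

definition diff_in_means :: "nat \<Rightarrow> (nat \<Rightarrow> real) \<Rightarrow> (nat \<Rightarrow> real) \<Rightarrow> (nat \<Rightarrow> bool) \<Rightarrow> real" where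
  "diff_in_means n Y1 Y0 W =
     2 / real n * (\<Sum>i<n. (if W i then 1 else 0) * Y1 i)
     - 2 / real n * (\<Sum>i<n. (1 - (if W i then 1 else 0)) * Y0 i)"

definition ate :: "nat \<Rightarrow> (nat \<Rightarrow> real) \<Rightarrow> (nat \<Rightarrow> real) \<Rightarrow> real" where
  "ate n Y1 Y0 = (1 / real n) * (\<Sum>i<n. Y1 i - Y0 i)"

end

theory Submission
  imports Defs
begin

definition fl :: "nat \<Rightarrow> (nat \<Rightarrow> bool) \<Rightarrow> nat \<Rightarrow> bool" where
  "fl m W = (\<lambda>i. if i < m then \<not> W i else W i)"

lemma fl_fl[simp]: "fl m (fl m W) = W" by (auto simp: fl_def)

lemma loop_flip_le:
  assumes MM: "\<And>W. M (fl m W) = M W" and G: "G \<subseteq> {..<m}"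
  shows "ord_spmf (=) (map_spmf (fl m) (psrr_loop a \<gamma> M G W)) (psrr_loop a \<gamma> M G (fl m W))"
proof -
  have "\<forall>W. ord_spmf (=) (map_spmf (fl m) (psrr_loop a \<gamma> M G W)) (psrr_loop a \<gamma> M G (fl m W))"
  proof (induction rule: psrr_loop.fixp_induct)
    case 1 show ?case by (intro admissible_all cont_intro) (simp_all add: curry_def mcont_call)
  next
    case 2 show ?case by simp
  next
    case (3 f)
    show ?case
    proof
      fix W
      show "ord_spmf (=) (map_spmf (fl m) (if M W \<le> a then return_spmf W
            else spmf_of_set {i \<in> G. W i} \<bind>
                 (\<lambda>i. spmf_of_set {j \<in> G. \<not> W j} \<bind>
                      (\<lambda>j. let W' = W(i := False, j := True)
                           in spmf_of_pmf
                               (bernoulli_pmf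
                                 (accept_prob \<gamma> (M W) (M W'))) \<bind>
                              (\<lambda>ba. f a \<gamma> M G (if ba then W' else W))))))
         (if M (fl m W) \<le> a then return_spmf (fl m W)
            else spmf_of_set {i \<in> G. fl m W i} \<bind>
                 (\<lambda>i. spmf_of_set {j \<in> G. \<not> fl m W j} \<bind>
                      (\<lambda>j. let W' = (fl m W)(i := False, j := True)
                           in spmf_of_pmf
                               (bernoulli_pmf
                                 (accept_prob \<gamma> (M (fl m W)) (M W'))) \<bind>
                              (\<lambda>ba. f a \<gamma> M G (if ba then W' else fl m W)))))"
      proof (cases "M W \<le> a")
        case True then show ?thesis by (simp add: MM)
      next
        case False
        have s1: "{i \<in> G. fl m W i} = {i \<in> G. \<not> W i}" and s2: "{i \<in> G. \<not> fl m W i} = {i \<in> G. W i}"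
          using G by (auto simp: fl_def)
        have key: "(fl m W)(j := False, i := True) = fl m (W(i := False, j := True))"
          if "i \<in> G" "j \<in> G" "W i" "\<not> W j" for i j
          using that G by (auto simp: fl_def fun_eq_iff)
        show ?thesis using False
          apply (simp add: MM s1 s2 Let_def map_spmf_bind_spmf o_def)
          apply (subst (2) bind_commute_spmf)
          apply (rule ord_spmf_bind_reflI)
          apply (rule ord_spmf_bind_reflI)
          subgoal for i j
          proof -
            assume a1: "i \<in> set_spmf (spmf_of_set {i \<in> G. W i})" and a2: "j \<in> set_spmf (spmf_of_set {j \<in> G. \<not> W j})"
            then have "i \<in> G" "j \<in> G" "W i" "\<not> W j" by (auto simp: set_spmf_of_set split: if_splits)
            note k = key[OF this]
            show ?thesis
              apply (simp add: k MM map_spmf_bind_spmf o_def)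
              unfolding map_spmf_conv_bind_spmf bind_spmf_def bind_assoc_pmf
              apply (rule rel_pmf_bindI[where R="(=)"])
               apply (simp add: pmf.rel_eq)
              using "3.IH" k by (auto simp: ord_spmf_map_spmf1 map_spmf_conv_bind_spmf bind_spmf_def bind_return_pmf)
          qed
          done
      qed
    qed
  qed
  then show ?thesis by blast
qed

lemma loop_flip:
  assumes MM: "\<And>W. M (fl m W) = M W" and G: "G \<subseteq> {..<m}"
  shows "map_spmf (fl m) (psrr_loop a \<gamma> M G W) = psrr_loop a \<gamma> M G (fl m W)"
proof (rule spmf.leq_antisym)
  show "ord_spmf (=) (map_spmf (fl m) (psrr_loop a \<gamma> M G W)) (psrr_loop a \<gamma> M G (fl m W))"
    using loop_flip_le[of M m G a \<gamma> W] MM G by blast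
  have "ord_spmf (=) (map_spmf (fl m) (psrr_loop a \<gamma> M G (fl m W))) (psrr_loop a \<gamma> M G W)"
    using loop_flip_le[of M m G a \<gamma> "fl m W"] MM G by simp
  then have "ord_spmf (=) (map_spmf (fl m) (map_spmf (fl m) (psrr_loop a \<gamma> M G (fl m W)))) (map_spmf (fl m) (psrr_loop a \<gamma> M G W))"
    unfolding ord_spmf_map_spmf12 by (rule ord_spmf_mono) simp
  then show "ord_spmf (=) (psrr_loop a \<gamma> M G (fl m W)) (map_spmf (fl m) (psrr_loop a \<gamma> M G W))"
    by (simp add: spmf.map_comp o_def)
qed

lemma mahal_fl: "mahal X m (fl m W) = mahal X m W"
proof -
  define A where "A = {i. i < m \<and> W i}"
  define B where "B = {i. i < m \<and> \<not> W i}"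
  have A': "{i. i < m \<and> fl m W i} = B" and B': "{i. i < m \<and> \<not> fl m W i} = A"
    by (auto simp: A_def B_def fl_def)
  have "A \<union> B = {..<m}" "A \<inter> B = {}" by (auto simp: A_def B_def)
  then have cB: "card B = m - card A" and cA: "card A \<le> m"
    by (metis card_Un_disjoint card_lessThan diff_add_inverse finite_Un finite_lessThan le_add1)+
  have e: "real (m - card A) * (1 - real (m - card A) / real m) = real (card A) * (1 - real (card A) / real m)"
  proof (cases "m = 0")
    case True then show ?thesis using cA by simp
  next
    case False then show ?thesis using cA by (simp add: of_nat_diff field_simps)
  qed
  show ?thesis unfolding mahal_def Let_def A' B' A_def[symmetric] B_def[symmetric] cB e
  proof -
    have "(sample_mean X B - sample_mean X A) = - (sample_mean X A - sample_mean X B)" by simp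
    then show "real (card A) * (1 - real (card A) / real m) *
    ((sample_mean X B - sample_mean X A) \<bullet> (matrix_inv (sample_cov X m) *v (sample_mean X B - sample_mean X A))) =
    real (card A) * (1 - real (card A) / real m) *
    ((sample_mean X A - sample_mean X B) \<bullet> (matrix_inv (sample_cov X m) *v (sample_mean X A - sample_mean X B)))"
      by (simp only: vec.neg inner_minus_left inner_minus_right minus_minus)
  qed
qed

lemma cum_mono: "k \<le> l \<Longrightarrow> cum ns k \<le> cum ns l"
  unfolding cum_def by (rule sum_mono2) auto

lemma cum_Suc: "cum ns (Suc k) = cum ns k + ns k"
  unfolding cum_def by simp

lemma seq_flip:
  fixes X :: "nat \<Rightarrow> real^'p"
  assumes sizes: "\<And>k. k < K \<Longrightarrow> ns k > 0 \<and> even (ns k)"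
    and half: "\<And>k. k < K \<Longrightarrow> nt k = ns k div 2"
  shows "k \<le> K \<Longrightarrow> map_spmf (\<lambda>(W, Mp). (fl (cum ns k) W, Mp)) (seq_psrr X ns nt s \<gamma> k) = seq_psrr X ns nt s \<gamma> k"
proof (induction k)
  case 0
  have "fl 0 = id" by (auto simp: fl_def fun_eq_iff)
  then show ?case by (simp add: cum_def)
next
  case (Suc k)
  then have kK: "k < K" by simp
  define c where "c = cum ns k"
  define m where "m = cum ns (Suc k)"
  define G where "G = group ns k"
  define M where "M = mahal X m"
  define S where "S = {T. T \<subseteq> G \<and> card T = nt k}"
  define a where "a = (\<lambda>Mp. real (ns k) / real m * nc_chisq_quantile CARD('p) (real c / real (ns k) * Mp) (1 / s k))"
  define W0 where "W0 = (\<lambda>W T i. if i \<in> G then i \<in> T else (W::nat\<Rightarrow>bool) i)"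
  define h where "h = (\<lambda>Mp V. map_spmf (\<lambda>W'. (W', M W')) (psrr_loop (a Mp) \<gamma> M G V))"
  define B where "B = (\<lambda>W Mp. spmf_of_set S \<bind> (\<lambda>T. h Mp (W0 W T)))"
  have cm: "c \<le> m" and Gm: "G \<subseteq> {..<m}" and Gc: "G \<inter> {..<c} = {}" and Gu: "{..<m} = G \<union> {..<c}"
    by (auto simp: c_def m_def G_def group_def cum_Suc)
  have finG: "finite G" and cG: "card G = ns k" by (auto simp: G_def group_def cum_Suc)
  have eq: "seq_psrr X ns nt s \<gamma> (Suc k) = seq_psrr X ns nt s \<gamma> k \<bind> (\<lambda>(W, Mp). B W Mp)"
    by (simp add: B_def h_def W0_def S_def a_def M_def G_def m_def c_def Let_def map_spmf_conv_bind_spmf split_def)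
  have MM: "\<And>W. M (fl m W) = M W" by (simp add: M_def mahal_fl)
  have imS: "(\<lambda>T. G - T) ` S = S"
  proof (rule set_eqI, rule iffI)
    fix T assume "T \<in> (\<lambda>T. G - T) ` S"
    then obtain U where U: "U \<in> S" "T = G - U" by blast
    then have "card T = ns k - nt k" using finG cG by (auto simp: S_def card_Diff_subset finite_subset)
    then show "T \<in> S" using U half[OF kK] sizes[OF kK] by (auto simp: S_def elim!: evenE)
  next
    fix T assume T: "T \<in> S"
    then have "G - T \<in> S" using finG cG half[OF kK] sizes[OF kK]
      by (auto simp: S_def card_Diff_subset finite_subset elim!: evenE)
    moreover have "T = G - (G - T)" using T by (auto simp: S_def)
    ultimately show "T \<in> (\<lambda>T. G - T) ` S" by blast
  qed
  have injS: "inj_on (\<lambda>T. G - T) S" by (rule inj_onI) (auto simp: S_def)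
  have W0fl: "fl m (W0 W T) = W0 (fl c W) (G - T)" if "T \<subseteq> G" for W T
    using that Gu cm by (auto simp: fl_def W0_def fun_eq_iff)
  have LF: "\<And>aa V. map_spmf (fl m) (psrr_loop aa \<gamma> M G V) = psrr_loop aa \<gamma> M G (fl m V)"
    using loop_flip[of M m G] MM Gm by blast
  have step: "map_spmf (\<lambda>(W, Mp). (fl m W, Mp)) (B W Mp) = B (fl c W) Mp" for W Mp
  proof -
    have "map_spmf (\<lambda>(W, Mp). (fl m W, Mp)) (B W Mp) = spmf_of_set S \<bind> (\<lambda>T. h Mp (fl m (W0 W T)))"
      unfolding B_def map_spmf_bind_spmf o_def h_def
      by (simp add: spmf.map_comp o_def MM LF[symmetric])
    also have "\<dots> = spmf_of_set S \<bind> (\<lambda>T. h Mp (W0 (fl c W) (G - T)))"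
      by (rule bind_spmf_cong) (auto simp: W0fl S_def set_spmf_of_set split: if_splits)
    also have "\<dots> = map_spmf (\<lambda>T. G - T) (spmf_of_set S) \<bind> (\<lambda>T. h Mp (W0 (fl c W) T))"
      by (simp add: bind_map_spmf o_def)
    also have "\<dots> = B (fl c W) Mp"
      by (simp add: map_spmf_of_set_inj_on[OF injS] imS B_def)
    finally show ?thesis .
  qed
  have "map_spmf (\<lambda>(W, Mp). (fl m W, Mp)) (seq_psrr X ns nt s \<gamma> (Suc k))
      = seq_psrr X ns nt s \<gamma> k \<bind> (\<lambda>(W, Mp). B (fl c W) Mp)"
    unfolding eq map_spmf_bind_spmf o_def by (simp add: step[unfolded split_def] split_def)
  also have "\<dots> = map_spmf (\<lambda>(W, Mp). (fl c W, Mp)) (seq_psrr X ns nt s \<gamma> k) \<bind> (\<lambda>(W, Mp). B W Mp)"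
    by (simp add: bind_map_spmf o_def split_def)
  also have "\<dots> = seq_psrr X ns nt s \<gamma> k \<bind> (\<lambda>(W, Mp). B W Mp)"
    using Suc.IH Suc.prems by (simp add: c_def)
  also have "\<dots> = seq_psrr X ns nt s \<gamma> (Suc k)"
    by (rule eq[symmetric])
  finally show ?case by (simp add: m_def)
qed

lemma dim_sym: "diff_in_means n Y1 Y0 W + diff_in_means n Y1 Y0 (fl n W) = 2 * ate n Y1 Y0"
proof -
  have c: "(\<Sum>i<n. (if fl n W i then 1 else 0) * Y i) = (\<Sum>i<n. (1 - (if W i then 1 else 0)) * (Y i::real))" for Y
    by (rule sum.cong) (auto simp: fl_def)
  have c2: "(\<Sum>i<n. (1 - (if fl n W i then 1 else 0)) * Y i) = (\<Sum>i<n. (if W i then 1 else 0) * (Y i::real))" for Y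
    by (rule sum.cong) (auto simp: fl_def)
  have d: "(\<Sum>i<n. (if W i then 1 else 0) * Y i) + (\<Sum>i<n. (1 - (if W i then 1 else 0)) * Y i) = (\<Sum>i<n. (Y i::real))" for Y
    by (simp add: sum.distrib[symmetric] algebra_simps)
  have "diff_in_means n Y1 Y0 W + diff_in_means n Y1 Y0 (fl n W)
     = 2 / real n * ((\<Sum>i<n. (if W i then 1 else 0) * Y1 i) + (\<Sum>i<n. (1 - (if W i then 1 else 0)) * Y1 i))
       - 2 / real n * ((\<Sum>i<n. (if W i then 1 else 0) * Y0 i) + (\<Sum>i<n. (1 - (if W i then 1 else 0)) * Y0 i))"
    unfolding diff_in_means_def c c2 by (simp add: algebra_simps)
  also have "\<dots> = 2 * ate n Y1 Y0" unfolding d ate_def by (simp add: sum_subtractf algebra_simps)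
  finally show ?thesis .
qed

theorem theorem4:
  fixes X :: "nat \<Rightarrow> real^'p"
    and ns nt :: "nat \<Rightarrow> nat"
    and s :: "nat \<Rightarrow> real"
    and \<gamma> :: real
    and K :: nat
    and Y1 Y0 :: "nat \<Rightarrow> real"
  assumes sizes: "\<And>k. k < K \<Longrightarrow> ns k > 0 \<and> even (ns k)"
    and half: "\<And>k. k < K \<Longrightarrow> nt k = ns k div 2"
    and s_pos: "\<And>k. k < K \<Longrightarrow> s k > 0"
    and gamma: "\<gamma> \<ge> 0"
    and cov_inv: "\<And>k. k < K \<Longrightarrow> invertible (sample_cov X (cum ns (Suc k)))"
    and terminates: "lossless_spmf (seqpsrr X ns nt s \<gamma> K)"
  shows "(\<integral>W. diff_in_means (cum ns K) Y1 Y0 W \<partial>measure_spmf (seqpsrr X ns nt s \<gamma> K))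
         = ate (cum ns K) Y1 Y0"
proof -
  define n where "n = cum ns K"
  define p where "p = seqpsrr X ns nt s \<gamma> K"
  define f where "f = diff_in_means n Y1 Y0"
  have "map_spmf (fl n) p = map_spmf fst (map_spmf (\<lambda>(W, Mp). (fl (cum ns K) W, Mp)) (seq_psrr X ns nt s \<gamma> K))"
    by (simp add: p_def seqpsrr_def spmf.map_comp o_def split_def n_def)
  also have "\<dots> = p" using seq_flip[OF sizes half, where k=K and X=X and s=s and \<gamma>=\<gamma>] by (simp add: p_def seqpsrr_def)
  finally have pinv: "map_spmf (fl n) p = p" .
  have int: "integrable (measure_spmf p) g" if bd: "\<And>W. \<bar>g W\<bar> \<le> C" for g :: "(nat \<Rightarrow> bool) \<Rightarrow> real" and C
    by (rule measure_spmf.integrable_const_bound[where B=C]) (auto intro: bd)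
  define C where "C = 2 / real n * (\<Sum>i<n. \<bar>Y1 i\<bar>) + 2 / real n * (\<Sum>i<n. \<bar>Y0 i\<bar>)"
  have bdf: "\<bar>f W\<bar> \<le> C" for W
  proof -
    have a1: "\<bar>\<Sum>i<n. (if W i then 1 else 0) * Y1 i\<bar> \<le> (\<Sum>i<n. \<bar>Y1 i\<bar>)"
      by (rule order_trans[OF sum_abs]) (rule sum_mono, simp)
    have a2: "\<bar>\<Sum>i<n. (1 - (if W i then 1 else 0)) * Y0 i\<bar> \<le> (\<Sum>i<n. \<bar>Y0 i\<bar>)"
      by (rule order_trans[OF sum_abs]) (rule sum_mono, simp)
    have "\<bar>f W\<bar> \<le> 2 / real n * \<bar>\<Sum>i<n. (if W i then 1 else 0) * Y1 i\<bar> + 2 / real n * \<bar>\<Sum>i<n. (1 - (if W i then 1 else 0)) * Y0 i\<bar>"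
    proof -
      have g: "\<And>c a b::real. c \<ge> 0 \<Longrightarrow> \<bar>c*a - c*b\<bar> \<le> c*\<bar>a\<bar> + c*\<bar>b\<bar>"
      proof -
        fix c a b :: real assume "c \<ge> 0"
        have "\<bar>c*a - c*b\<bar> \<le> \<bar>c*a\<bar> + \<bar>c*b\<bar>" by (rule abs_triangle_ineq4)
        also have "\<dots> = c*\<bar>a\<bar> + c*\<bar>b\<bar>" using \<open>c \<ge> 0\<close> by (simp add: abs_mult)
        finally show "\<bar>c*a - c*b\<bar> \<le> c*\<bar>a\<bar> + c*\<bar>b\<bar>" .
      qed
      show ?thesis unfolding f_def diff_in_means_def by (rule g) simp
    qed
    also have "\<dots> \<le> C" unfolding C_def
      by (intro add_mono mult_left_mono a1 a2) auto
    finally show ?thesis .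
  qed
  have i1: "integrable (measure_spmf p) f" by (rule int[OF bdf])
  have i2: "integrable (measure_spmf p) (\<lambda>W. f (fl n W))" by (rule int[OF bdf])
  have "(\<integral>W. f W \<partial>measure_spmf p) = (\<integral>W. f W \<partial>measure_spmf (map_spmf (fl n) p))" by (simp add: pinv)
  also have "\<dots> = (\<integral>W. f (fl n W) \<partial>measure_spmf p)"
    unfolding measure_map_spmf_conv_distr by (rule integral_distr) auto
  finally have e: "(\<integral>W. f W \<partial>measure_spmf p) = (\<integral>W. f (fl n W) \<partial>measure_spmf p)" .
  have "2 * (\<integral>W. f W \<partial>measure_spmf p) = (\<integral>W. f W + f (fl n W) \<partial>measure_spmf p)"
    using e i1 i2 by simp
  also have "\<dots> = (\<integral>W. 2 * ate n Y1 Y0 \<partial>measure_spmf p)"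
    unfolding f_def dim_sym ..
  also have "\<dots> = 2 * ate n Y1 Y0"
    using terminates by (simp add: p_def lossless_weight_spmfD weight_spmf_def[symmetric])
  finally show ?thesis by (simp add: f_def p_def n_def)
qed

end
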